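(* Let $v\ge4$ be an integer with $v\not\equiv 2\pmod 4$. Then an optimum $(d,2)$-CDA$((d+1)v^2;6,v)$ exists for every positive integer $d$ with $d+1\le v$.
   Context: Consecutive $t$-way interaction in an $N\times k$ array $A=(a_{ij})$ over a $v$-set $V$: $T=\{(i,x_i),\dots,(i+t-1,x_{i+t-1})\}$, $1\le i\le k-t+1$, $x_r\in V$; $\rho(A,T)=\{r: a_{r,j}=x_j\ \forall (j,x_j)\in T\}$, $\rho(A,\mathcal T)=\bigcup_{T\in\mathcal T}\rho(A,T)$. A $(d,t)$-CDA$(N;k,v)$ is an $N\times k$ array over $V$ in which every $t$ consecutive columns contain every $t$-tuple at least once, and such that for every set $\mathcal T$ of exactly $d$ distinct consecutive $t$-way interactions and every consecutive $t$-way interaction $T$: $\rho(A,T)\subseteq\rho(A,\mathcal T)$ iff $T\in\mathcal T$. It is optimum if $N=(d+1)v^t$. *)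

theory Defs
  imports Main
begin

text \<open>An N x k array over the v-set {0..<v} is a function A :: nat => nat => nat,
  rows 0..<N, columns 0..<k (0-indexed).\<close>

definition cons_interactions :: "nat \<Rightarrow> nat \<Rightarrow> nat \<Rightarrow> (nat \<times> nat) set set" where
  "cons_interactions t k v =
     {T. \<exists>i x. i + t \<le> k \<and> (\<forall>j<t. x j < v) \<and> T = (\<lambda>j. (i + j, x j)) ` {..<t}}"

definition rho :: "nat \<Rightarrow> (nat \<Rightarrow> nat \<Rightarrow> nat) \<Rightarrow> (nat \<times> nat) set \<Rightarrow> nat set" where
  "rho N A T = {r. r < N \<and> (\<forall>(j, x)\<in>T. A r j = x)}"

definition rho_set :: "nat \<Rightarrow> (nat \<Rightarrow> nat \<Rightarrow> nat) \<Rightarrow> (nat \<times> nat) set set \<Rightarrow> nat set" where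
  "rho_set N A TT = (\<Union>T\<in>TT. rho N A T)"

definition is_CDA :: "nat \<Rightarrow> nat \<Rightarrow> nat \<Rightarrow> nat \<Rightarrow> nat \<Rightarrow> (nat \<Rightarrow> nat \<Rightarrow> nat) \<Rightarrow> bool" where
  "is_CDA d t N k v A \<longleftrightarrow>
     (\<forall>r<N. \<forall>c<k. A r c < v) \<and>
     (\<forall>i x. i + t \<le> k \<longrightarrow> (\<forall>j<t. x j < v) \<longrightarrow> (\<exists>r<N. \<forall>j<t. A r (i + j) = x j)) \<and>
     (\<forall>TT T. TT \<subseteq> cons_interactions t k v \<longrightarrow> finite TT \<longrightarrow> card TT = d \<longrightarrow>
        T \<in> cons_interactions t k v \<longrightarrow>
        (rho N A T \<subseteq> rho_set N A TT \<longleftrightarrow> T \<in> TT))"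

definition is_optimum_CDA :: "nat \<Rightarrow> nat \<Rightarrow> nat \<Rightarrow> nat \<Rightarrow> nat \<Rightarrow> (nat \<Rightarrow> nat \<Rightarrow> nat) \<Rightarrow> bool" where
  "is_optimum_CDA d t N k v A \<longleftrightarrow> is_CDA d t N k v A \<and> N = (d + 1) * v ^ t"

end

theory Submission
  imports Defs
begin

definition ww :: "nat \<Rightarrow> nat \<Rightarrow> nat" where
  "ww v c = (if c < v div 2 then c else if c = v - 1 then v div 2 else c + 1)"

definition F :: "nat \<Rightarrow> nat \<Rightarrow> nat \<Rightarrow> nat \<Rightarrow> nat \<Rightarrow> nat" where
  "F v a b c j = (if j = 0 then a else if j = 1 then b else if j = 2 then (a + c) mod v
     else if j = 3 then (b + c) mod v else if j = 4 then (a + 2 * c) mod v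
     else (b + c + v - ww v c) mod v)"

lemma ww_lt: "c < v \<Longrightarrow> ww v c < v"
  by (auto simp: ww_def)

lemma ww_inj: "c < v \<Longrightarrow> c' < v \<Longrightarrow> ww v c = ww v c' \<Longrightarrow> c = c'"
  by (auto simp: ww_def split: if_splits)

lemma modeq: "((x::nat) mod v = y mod v) \<longleftrightarrow> int v dvd int x - int y"
  by (metis mod_eq_dvd_iff of_nat_eq_iff of_nat_mod)

lemma small_dvd: "int v dvd (x::int) \<Longrightarrow> \<bar>x\<bar> < int v \<Longrightarrow> x = 0"
  proof (rule ccontr)
  assume a: "int v dvd x" "\<bar>x\<bar> < int v" "x \<noteq> 0"
  hence "int v dvd \<bar>x\<bar>" by simp
  hence "int v \<le> \<bar>x\<bar>" using a(3) by (intro zdvd_imp_le) auto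
  thus False using a(2) by simp
qed

lemma small_dvd2: "int v dvd 2 * (x::int) \<Longrightarrow> \<bar>x\<bar> < int v \<Longrightarrow> x = 0 \<or> 2 * x = int v \<or> 2 * x = - int v"
proof -
  assume a: "int v dvd 2 * x" "\<bar>x\<bar> < int v"
  then obtain q where q: "2 * x = int v * q" by (auto elim: dvdE)
  have "\<bar>q\<bar> < 2"
  proof (rule ccontr)
    assume "\<not> \<bar>q\<bar> < 2"
    hence "int v * 2 \<le> int v * \<bar>q\<bar>" using a(2) by (intro mult_left_mono) auto
    also have "\<dots> = \<bar>2 * x\<bar>" using q a(2) by (simp add: abs_mult)
    finally show False using a(2) by simp
  qed
  hence "q = 0 \<or> q = 1 \<or> q = -1" by auto
  thus ?thesis using q by auto
qed

lemma wgap: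
  assumes "v \<ge> 4" "c' < v" "2 * c' = 2 * c + v"
  shows "\<not> int v dvd (int (ww v c') - int (ww v c) - (int c' - int c))"
proof
  assume d: "int v dvd (int (ww v c') - int (ww v c) - (int c' - int c))"
  define n where "n = v div 2"
  have v: "v = 2 * n" and c': "c' = c + n" and cn: "c < n" using assms by (auto simp: n_def, presburger+)
  have wc: "ww v c = c" using cn by (simp add: ww_def n_def)
  show False
  proof (cases "c' = v - 1")
    case True
    hence "ww v c' = n" by (simp add: ww_def n_def)
    hence "int (ww v c') - int (ww v c) - (int c' - int c) = - (int n - 1)"
    proof -
      have "c + 1 = n" using True c' v cn by linarith
      thus ?thesis using wc c' \<open>ww v c' = n\<close> by auto
    qed
    hence "int v dvd int n - 1" using d by (metis dvd_minus_iff)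
    moreover have "\<bar>int n - 1\<bar> < int v" "int n - 1 \<noteq> 0" using v assms(1) by auto
    ultimately show False using small_dvd by blast
  next
    case False
    hence "ww v c' = c' + 1" using c' cn by (simp add: ww_def n_def)
    hence "int (ww v c') - int (ww v c) - (int c' - int c) = 1" using wc by simp
    thus False using d assms(1) by simp
  qed
qed

lemma key:
  assumes v4: "v \<ge> 4" and lt: "a < v" "b < v" "c < v" "a' < v" "b' < v" "c' < v"
    and ij: "i < j" "j \<le> 4"
    and e1: "F v a b c i = F v a' b' c' i" and e2: "F v a b c (Suc i) = F v a' b' c' (Suc i)"
    and e3: "F v a b c j = F v a' b' c' j" and e4: "F v a b c (Suc j) = F v a' b' c' (Suc j)"
  shows "a = a' \<and> b = b' \<and> c = c'"
proof -
  define \<alpha> where "\<alpha> = int a - int a'"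
  define \<beta> where "\<beta> = int b - int b'"
  define \<gamma> where "\<gamma> = int c - int c'"
  define \<kappa> where "\<kappa> = (int c - int (ww v c)) - (int c' - int (ww v c'))"
  have w1: "ww v c < v" "ww v c' < v" using lt ww_lt by auto
  have c0: "F v a b c 0 = F v a' b' c' 0 \<Longrightarrow> a = a'" by (simp add: F_def)
  have c1: "F v a b c 1 = F v a' b' c' 1 \<Longrightarrow> b = b'" by (simp add: F_def)
  have c2: "F v a b c 2 = F v a' b' c' 2 \<Longrightarrow> int v dvd \<alpha> + \<gamma>"
    by (simp add: F_def modeq \<alpha>_def \<gamma>_def algebra_simps)
  have c3: "F v a b c 3 = F v a' b' c' 3 \<Longrightarrow> int v dvd \<beta> + \<gamma>"
    by (simp add: F_def modeq \<beta>_def \<gamma>_def algebra_simps)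
  have c4: "F v a b c 4 = F v a' b' c' 4 \<Longrightarrow> int v dvd \<alpha> + 2 * \<gamma>"
    by (simp add: F_def modeq \<alpha>_def \<gamma>_def algebra_simps)
  have c5: "F v a b c 5 = F v a' b' c' 5 \<Longrightarrow> int v dvd \<beta> + \<kappa>"
  proof -
    assume h: "F v a b c 5 = F v a' b' c' 5"
    have "int v dvd int (b + c + v - ww v c) - int (b' + c' + v - ww v c')"
      using h by (simp add: F_def modeq)
    also have "int (b + c + v - ww v c) - int (b' + c' + v - ww v c') = \<beta> + \<kappa>"
      using w1 by (simp add: of_nat_diff \<beta>_def \<kappa>_def)
    finally show ?thesis .
  qed
  have gab: "\<bar>\<gamma>\<bar> < int v" "\<bar>\<alpha>\<bar> < int v" "\<bar>\<beta>\<bar> < int v"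
    using lt by (auto simp: \<alpha>_def \<beta>_def \<gamma>_def)
  have fromg: "int v dvd \<gamma> \<Longrightarrow> c = c'" using small_dvd[of v \<gamma>] gab by (simp add: \<gamma>_def)
  have wdiff: "int v dvd \<gamma> - \<kappa> \<Longrightarrow> c = c'"
  proof -
    assume "int v dvd \<gamma> - \<kappa>"
    hence "int v dvd int (ww v c) - int (ww v c')" by (simp add: \<gamma>_def \<kappa>_def)
    moreover have "\<bar>int (ww v c) - int (ww v c')\<bar> < int v" using w1 by auto
    ultimately have "int (ww v c) - int (ww v c') = 0" by (rule small_dvd)
    thus "c = c'" using ww_inj lt by simp
  qed
  have k04: "int v dvd 2 * \<gamma> \<Longrightarrow> int v dvd \<kappa> \<Longrightarrow> c = c'"
  proof -
    assume h1: "int v dvd 2 * \<gamma>" and h2: "int v dvd \<kappa>"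
    have "\<gamma> = 0 \<or> 2 * \<gamma> = int v \<or> 2 * \<gamma> = - int v" using small_dvd2 h1 gab by blast
    moreover have "2 * c' = 2 * c + v \<Longrightarrow> False"
    proof -
      assume h: "2 * c' = 2 * c + v"
      have "\<kappa> = int (ww v c') - int (ww v c) - (int c' - int c)" unfolding \<kappa>_def by linarith
      thus False using wgap[of v c' c] v4 lt h h2 by metis
    qed
    moreover have "2 * c = 2 * c' + v \<Longrightarrow> False"
    proof -
      assume h: "2 * c = 2 * c' + v"
      have "- \<kappa> = int (ww v c) - int (ww v c') - (int c - int c')" unfolding \<kappa>_def by linarith
      moreover have "int v dvd - \<kappa>" using h2 by simp
      ultimately show False using wgap[of v c c'] v4 lt h by metis
    qed
    moreover have "2 * \<gamma> = int v \<Longrightarrow> 2 * c = 2 * c' + v" unfolding \<gamma>_def by arith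
    moreover have "2 * \<gamma> = - int v \<Longrightarrow> 2 * c' = 2 * c + v" unfolding \<gamma>_def by arith
    moreover have "\<gamma> = 0 \<Longrightarrow> c = c'" unfolding \<gamma>_def by arith
    ultimately show "c = c'" by blast
  qed
  have cc: "c = c'"
  proof -
    have "i = 0 \<and> j = 1 \<or> i = 0 \<and> j = 2 \<or> i = 0 \<and> j = 3 \<or> i = 0 \<and> j = 4 \<or>
          i = 1 \<and> j = 2 \<or> i = 1 \<and> j = 3 \<or> i = 1 \<and> j = 4 \<or>
          i = 2 \<and> j = 3 \<or> i = 2 \<and> j = 4 \<or> i = 3 \<and> j = 4" using ij by presburger
    thus ?thesis
    proof (elim disjE conjE)
      assume h: "i = 0" "j = 1"
      have "a = a'" using c0 e1 h by simp
      moreover have "int v dvd \<alpha> + \<gamma>" using c2 e4 h by (simp add: numeral_2_eq_2)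
      ultimately show ?thesis using fromg by (simp add: \<alpha>_def)
    next
      assume h: "i = 0" "j = 2"
      have "a = a'" using c0 e1 h by simp
      moreover have "int v dvd \<alpha> + \<gamma>" using c2 e3 h by simp
      ultimately show ?thesis using fromg by (simp add: \<alpha>_def)
    next
      assume h: "i = 0" "j = 3"
      have "b = b'" using c1 e2 h by simp
      moreover have "int v dvd \<beta> + \<gamma>" using c3 e3 h by simp
      ultimately show ?thesis using fromg by (simp add: \<beta>_def)
    next
      assume h: "i = 0" "j = 4"
      have "a = a'" using c0 e1 h by simp
      moreover have "b = b'" using c1 e2 h by simp
      moreover have "int v dvd \<alpha> + 2 * \<gamma>" using c4 e3 h by simp
      moreover have "int v dvd \<beta> + \<kappa>" using c5 e4 h by (simp add: eval_nat_numeral)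
      ultimately show ?thesis using k04 by (simp add: \<alpha>_def \<beta>_def)
    next
      assume h: "i = 1" "j = 2"
      have "b = b'" using c1 e1 h by simp
      moreover have "int v dvd \<beta> + \<gamma>" using c3 e4 h by (simp add: eval_nat_numeral)
      ultimately show ?thesis using fromg by (simp add: \<beta>_def)
    next
      assume h: "i = 1" "j = 3"
      have "b = b'" using c1 e1 h by simp
      moreover have "int v dvd \<beta> + \<gamma>" using c3 e3 h by simp
      ultimately show ?thesis using fromg by (simp add: \<beta>_def)
    next
      assume h: "i = 1" "j = 4"
      have "int v dvd \<alpha> + \<gamma>" using c2 e2 h by (simp add: numeral_2_eq_2)
      moreover have "int v dvd \<alpha> + 2 * \<gamma>" using c4 e3 h by simp
      ultimately have "int v dvd (\<alpha> + 2 * \<gamma>) - (\<alpha> + \<gamma>)" by (intro dvd_diff)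
      thus ?thesis using fromg by simp
    next
      assume h: "i = 2" "j = 3"
      have "int v dvd \<alpha> + \<gamma>" using c2 e1 h by simp
      moreover have "int v dvd \<alpha> + 2 * \<gamma>" using c4 e4 h by (simp add: eval_nat_numeral)
      ultimately have "int v dvd (\<alpha> + 2 * \<gamma>) - (\<alpha> + \<gamma>)" by (intro dvd_diff)
      thus ?thesis using fromg by simp
    next
      assume h: "i = 2" "j = 4"
      have "int v dvd \<alpha> + \<gamma>" using c2 e1 h by simp
      moreover have "int v dvd \<alpha> + 2 * \<gamma>" using c4 e3 h by simp
      ultimately have "int v dvd (\<alpha> + 2 * \<gamma>) - (\<alpha> + \<gamma>)" by (intro dvd_diff)
      thus ?thesis using fromg by simp
    next
      assume h: "i = 3" "j = 4"
      have "int v dvd \<beta> + \<gamma>" using c3 e1 h by simp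
      moreover have "int v dvd \<beta> + \<kappa>" using c5 e4 h by (simp add: eval_nat_numeral)
      ultimately have "int v dvd (\<beta> + \<gamma>) - (\<beta> + \<kappa>)" by (intro dvd_diff)
      thus ?thesis using wdiff by simp
    qed
  qed
  have ak: "(even k \<longrightarrow> a = a') \<and> (odd k \<longrightarrow> b = b')"
    if k: "k \<le> 5" "F v a b c k = F v a' b' c' k" for k
  proof -
    have "k = 0 \<or> k = 1 \<or> k = 2 \<or> k = 3 \<or> k = 4 \<or> k = 5" using k by presburger
    thus ?thesis
    proof (elim disjE)
      assume "k = 0" thus ?thesis using k c0 by simp
    next
      assume "k = 1" thus ?thesis using k c1 by simp
    next
      assume h: "k = 2"
      hence "int v dvd \<alpha>" using k c2 cc by (simp add: \<gamma>_def)
      hence "\<alpha> = 0" using small_dvd gab(2) by blast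
      thus ?thesis using h by (simp add: \<alpha>_def)
    next
      assume h: "k = 3"
      hence "int v dvd \<beta>" using k c3 cc by (simp add: \<gamma>_def)
      hence "\<beta> = 0" using small_dvd gab(3) by blast
      thus ?thesis using h by (simp add: \<beta>_def)
    next
      assume h: "k = 4"
      hence "int v dvd \<alpha>" using k c4 cc by (simp add: \<gamma>_def)
      hence "\<alpha> = 0" using small_dvd gab(2) by blast
      thus ?thesis using h by (simp add: \<alpha>_def)
    next
      assume h: "k = 5"
      hence "int v dvd \<beta>" using k c5 cc by (simp add: \<kappa>_def)
      hence "\<beta> = 0" using small_dvd gab(3) by blast
      thus ?thesis using h by (simp add: \<beta>_def)
    qed
  qed
  have "a = a' \<and> b = b'"
    using ak[of i] ak[of "Suc i"] e1 e2 ij by auto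
  thus ?thesis using cc by simp
qed


lemma F_lt: "a < v \<Longrightarrow> b < v \<Longrightarrow> F v a b c j < v"
  by (simp add: F_def)

lemma decode:
  fixes a b c v :: nat
  assumes "a < v" "b < v"
  shows "(c * v * v + a * v + b) div (v * v) = c \<and> (c * v * v + a * v + b) div v mod v = a
     \<and> (c * v * v + a * v + b) mod v = b"
proof -
  have v: "v > 0" using assms by auto
  have "a * v + b < v * v"
  proof -
    have "a * v + b < a * v + v" using assms by simp
    also have "\<dots> = (a + 1) * v" by simp
    also have "\<dots> \<le> v * v" using assms by (intro mult_right_mono) auto
    finally show ?thesis .
  qed
  have e1: "c * v * v + a * v + b = (a * v + b) + c * (v * v)" by (simp add: algebra_simps)
  have 1: "(c * v * v + a * v + b) div (v * v) = c"
    unfolding e1 using \<open>a * v + b < v * v\<close> v by simp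
  have e2: "c * v * v + a * v + b = b + (c * v + a) * v" by (simp add: algebra_simps)
  have 2: "(c * v * v + a * v + b) div v = c * v + a"
    unfolding e2 using assms v by simp
  have 3: "(c * v * v + a * v + b) mod v = b"
    unfolding e2 using assms v by simp
  have 4: "(c * v + a) mod v = a" using assms by simp
  show ?thesis using 1 2 3 4 by simp
qed

lemma encode:
  fixes r v :: nat
  assumes "0 < v"
  shows "r = (r div (v * v)) * v * v + (r div v mod v) * v + r mod v"
proof -
  have "r = r div (v * v) * (v * v) + r mod (v * v)" by (rule div_mult_mod_eq[symmetric])
  also have "r mod (v * v) = v * (r div v mod v) + r mod v" by (rule mod_mult2_eq)
  finally show ?thesis by (simp add: algebra_simps)
qed

lemma ex2I: "P a b \<Longrightarrow> a < v \<Longrightarrow> b < v \<Longrightarrow> \<exists>a<v. \<exists>b<v. P a b"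
  by blast

lemma solve:
  assumes "i \<le> 4" "x < v" "y < v" "c < v"
  shows "\<exists>a<v. \<exists>b<v. F v a b c i = x \<and> F v a b c (Suc i) = y"
proof -
  have v: "0 < v" using assms by auto
  have sub: "((z + v - c) mod v + c) mod v = z mod v" for z
  proof -
    have "((z + v - c) mod v + c) mod v = (z + v - c + c) mod v" by (simp add: mod_add_left_eq)
    also have "z + v - c + c = z + v" using assms by simp
    finally show ?thesis by simp
  qed
  have sub2: "((z + 2 * v - 2 * c) mod v + 2 * c) mod v = z mod v" for z
  proof -
    have "((z + 2 * v - 2 * c) mod v + 2 * c) mod v = (z + 2 * v - 2 * c + 2 * c) mod v" by (simp add: mod_add_left_eq)
    also have "z + 2 * v - 2 * c + 2 * c = z + v * 2" using assms by simp
    finally show ?thesis by simp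
  qed
  have w: "ww v c < v" using assms ww_lt by auto
  have sub5: "((y + ww v c + v - c) mod v + c + v - ww v c) mod v = y"
  proof -
    have e: "(y + ww v c + v - c) mod v + c + v - ww v c = (y + ww v c + v - c) mod v + (c + v - ww v c)"
      using w by simp
    have "((y + ww v c + v - c) mod v + (c + v - ww v c)) mod v = (y + ww v c + v - c + (c + v - ww v c)) mod v"
      by (simp add: mod_add_left_eq)
    also have "y + ww v c + v - c + (c + v - ww v c) = y + v * 2" using assms w by simp
    finally show ?thesis using e assms by simp
  qed
  have "i = 0 \<or> i = 1 \<or> i = 2 \<or> i = 3 \<or> i = 4" using assms by auto
  thus ?thesis
  proof (elim disjE)
    assume "i = 0" thus ?thesis using assms by (intro ex2I[where a=x and b=y]) (simp_all add: F_def)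
  next
    assume "i = 1" thus ?thesis using assms v sub[of y]
      by (intro ex2I[where a="(y + v - c) mod v" and b=x]) (simp_all add: F_def)
  next
    assume "i = 2" thus ?thesis using assms v sub[of y] sub[of x]
      by (intro ex2I[where a="(x + v - c) mod v" and b="(y + v - c) mod v"]) (simp_all add: F_def)
  next
    assume "i = 3" thus ?thesis using assms v sub[of x] sub2[of y]
      by (intro ex2I[where a="(y + 2 * v - 2 * c) mod v" and b="(x + v - c) mod v"]) (simp_all add: F_def)
  next
    assume "i = 4" thus ?thesis using assms v sub2[of x] sub5
      by (intro ex2I[where a="(x + 2 * v - 2 * c) mod v" and b="(y + ww v c + v - c) mod v"]) (simp_all add: F_def)
  qed
qed

definition Arr :: "nat \<Rightarrow> nat \<Rightarrow> nat \<Rightarrow> nat" where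
  "Arr v r j = F v (r div v mod v) (r mod v) (r div (v * v)) j"


lemma cover:
  assumes "i \<le> 4" "x < v" "y < v" "c < m" "m \<le> v"
  shows "\<exists>r<m * v ^ 2. r div (v * v) = c \<and> Arr v r i = x \<and> Arr v r (Suc i) = y"
proof -
  obtain a b where ab: "a < v" "b < v" "F v a b c i = x" "F v a b c (Suc i) = y"
    using solve[of i x v y c] assms by auto
  define r where "r = c * v * v + a * v + b"
  have d: "r div (v * v) = c" "r div v mod v = a" "r mod v = b"
    using decode[OF ab(1,2), of c] by (simp_all add: r_def)
  have "a * v + b < v * v"
  proof -
    have "a * v + b < a * v + v" using ab by simp
    also have "\<dots> = (a + 1) * v" by simp
    also have "\<dots> \<le> v * v" using ab by (intro mult_right_mono) auto
    finally show ?thesis .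
  qed
  hence "r < c * (v * v) + v * v" by (simp add: r_def)
  also have "\<dots> = (c + 1) * (v * v)" by simp
  also have "\<dots> \<le> m * (v * v)" using assms by (intro mult_right_mono) auto
  finally have "r < m * v ^ 2" by (simp add: power2_eq_square)
  thus ?thesis using d ab by (auto simp: Arr_def)
qed

lemma rows_eq:
  assumes "v \<ge> 4" "m \<le> v" "r1 < m * v ^ 2" "r2 < m * v ^ 2" "i < j" "j \<le> 4"
    "Arr v r1 i = Arr v r2 i" "Arr v r1 (Suc i) = Arr v r2 (Suc i)"
    "Arr v r1 j = Arr v r2 j" "Arr v r1 (Suc j) = Arr v r2 (Suc j)"
  shows "r1 = r2"
proof -
  have v: "0 < v" using assms by auto
  have "r1 div (v * v) < m" "r2 div (v * v) < m" using assms
    by (simp_all add: less_mult_imp_div_less power2_eq_square)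
  hence "r1 div (v * v) < v" "r2 div (v * v) < v" using assms by auto
  moreover have "r1 div v mod v < v" "r2 div v mod v < v" "r1 mod v < v" "r2 mod v < v" using v by auto
  ultimately have "r1 div v mod v = r2 div v mod v \<and> r1 mod v = r2 mod v \<and> r1 div (v * v) = r2 div (v * v)"
    using key[OF assms(1), of "r1 div v mod v" "r1 mod v" "r1 div (v * v)"
        "r2 div v mod v" "r2 mod v" "r2 div (v * v)" i j] assms by (simp add: Arr_def)
  thus ?thesis using encode[OF v, of r1] encode[OF v, of r2] by metis
qed

lemma inter_repr:
  "T \<in> cons_interactions 2 6 v \<longleftrightarrow> (\<exists>i x0 x1. i \<le> 4 \<and> x0 < v \<and> x1 < v \<and> T = {(i, x0), (Suc i, x1)})"
proof
  assume "T \<in> cons_interactions 2 6 v"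
  then obtain i x where h: "i + 2 \<le> 6" "\<forall>j<2. x j < v" "T = (\<lambda>j. (i + j, x j)) ` {..<2}"
    by (auto simp: cons_interactions_def)
  have "{..<2::nat} = {0, 1}" by auto
  hence "T = {(i, x 0), (Suc i, x 1)}" using h(3) by auto
  moreover have "i \<le> 4" "x 0 < v" "x 1 < v" using h by auto
  ultimately show "\<exists>i x0 x1. i \<le> 4 \<and> x0 < v \<and> x1 < v \<and> T = {(i, x0), (Suc i, x1)}" by blast
next
  assume "\<exists>i x0 x1. i \<le> 4 \<and> x0 < v \<and> x1 < v \<and> T = {(i, x0), (Suc i, x1)}"
  then obtain i x0 x1 where h: "i \<le> 4" "x0 < v" "x1 < v" "T = {(i, x0), (Suc i, x1)}" by blast
  define x where "x = (\<lambda>j::nat. if j = 0 then x0 else x1)"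
  have "{..<2::nat} = {0, 1}" by auto
  hence "T = (\<lambda>j. (i + j, x j)) ` {..<2}" using h by (auto simp: x_def)
  moreover have "\<forall>j<2. x j < v" using h by (auto simp: x_def)
  ultimately show "T \<in> cons_interactions 2 6 v" using h unfolding cons_interactions_def
    by (intro CollectI exI[of _ i] exI[of _ x]) auto
qed

lemma rho_pair: "rho N A {(i, x0), (Suc i, x1)} = {r. r < N \<and> A r i = x0 \<and> A r (Suc i) = x1}"
  by (auto simp: rho_def)


lemma card_rho:
  assumes "T \<in> cons_interactions 2 6 v" "m \<le> v"
  shows "m \<le> card (rho (m * v ^ 2) (Arr v) T)"
proof -
  obtain i x0 x1 where h: "i \<le> 4" "x0 < v" "x1 < v" "T = {(i, x0), (Suc i, x1)}"
    using inter_repr[THEN iffD1, OF assms(1)] by blast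
  let ?R = "rho (m * v ^ 2) (Arr v) T"
  have "?R \<subseteq> {..<m * v ^ 2}" by (auto simp: rho_def)
  hence fin: "finite ?R" by (rule finite_subset) simp
  have "{..<m} \<subseteq> (\<lambda>r. r div (v * v)) ` ?R"
  proof
    fix c assume "c \<in> {..<m}"
    hence cm: "c < m" by simp
    obtain r where r: "r < m * v ^ 2" "r div (v * v) = c" "Arr v r i = x0" "Arr v r (Suc i) = x1"
      using cover[OF h(1) h(2) h(3) cm assms(2)] by blast
    have "r \<in> ?R" unfolding h(4) rho_pair using r by blast
    thus "c \<in> (\<lambda>r. r div (v * v)) ` ?R" using r(2) by blast
  qed
  hence "card {..<m} \<le> card ((\<lambda>r. r div (v * v)) ` ?R)" using fin by (intro card_mono) auto
  also have "\<dots> \<le> card ?R" using fin by (rule card_image_le)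
  finally show ?thesis by simp
qed

lemma inter_le1:
  assumes "v \<ge> 4" "m \<le> v" "T \<in> cons_interactions 2 6 v" "T' \<in> cons_interactions 2 6 v" "T \<noteq> T'"
  shows "card (rho (m * v ^ 2) (Arr v) T \<inter> rho (m * v ^ 2) (Arr v) T') \<le> 1"
proof -
  obtain i x0 x1 where h: "i \<le> 4" "x0 < v" "x1 < v" "T = {(i, x0), (Suc i, x1)}"
    using inter_repr[THEN iffD1, OF assms(3)] by blast
  obtain i' y0 y1 where h': "i' \<le> 4" "y0 < v" "y1 < v" "T' = {(i', y0), (Suc i', y1)}"
    using inter_repr[THEN iffD1, OF assms(4)] by blast
  let ?S = "rho (m * v ^ 2) (Arr v) T \<inter> rho (m * v ^ 2) (Arr v) T'"
  have "?S \<subseteq> {..<m * v ^ 2}" by (auto simp: rho_def)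
  hence fin: "finite ?S" by (rule finite_subset) simp
  have "r1 = r2" if r: "r1 \<in> ?S" "r2 \<in> ?S" for r1 r2
  proof -
    have "r1 \<in> rho (m * v ^ 2) (Arr v) {(i, x0), (Suc i, x1)}" "r1 \<in> rho (m * v ^ 2) (Arr v) {(i', y0), (Suc i', y1)}"
      using r(1) h(4) h'(4) by auto
    hence r1: "r1 < m * v ^ 2" "Arr v r1 i = x0" "Arr v r1 (Suc i) = x1" "Arr v r1 i' = y0" "Arr v r1 (Suc i') = y1"
      unfolding rho_pair by blast+
    have "r2 \<in> rho (m * v ^ 2) (Arr v) {(i, x0), (Suc i, x1)}" "r2 \<in> rho (m * v ^ 2) (Arr v) {(i', y0), (Suc i', y1)}"
      using r(2) h(4) h'(4) by auto
    hence r2: "r2 < m * v ^ 2" "Arr v r2 i = x0" "Arr v r2 (Suc i) = x1" "Arr v r2 i' = y0" "Arr v r2 (Suc i') = y1"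
      unfolding rho_pair by blast+
    consider "i = i'" | "i < i'" | "i' < i" by linarith
    thus ?thesis
    proof cases
      case 1
      hence "T = T'" using r1 h h' by simp
      thus ?thesis using assms by simp
    next
      case 2
      thus ?thesis using rows_eq[OF assms(1,2) r1(1) r2(1) 2] h' r1 r2 by simp
    next
      case 3
      thus ?thesis using rows_eq[OF assms(1,2) r1(1) r2(1) 3] h r1 r2 by simp
    qed
  qed
  thus ?thesis using fin by (simp add: card_le_Suc0_iff_eq)
qed

theorem mainTheorem12:
  fixes v d :: nat
  assumes "v \<ge> 4" and "v mod 4 \<noteq> 2" and "d \<ge> 1" and "d + 1 \<le> v"
  shows "\<exists>A. is_optimum_CDA d 2 ((d + 1) * v ^ 2) 6 v A"
proof -
  let ?m = "d + 1"
  let ?N = "?m * v ^ 2"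
  let ?A = "Arr v"
  have v0: "0 < v" using assms by simp
  have p1: "\<forall>r<?N. \<forall>c<6. ?A r c < v"
  proof (intro allI impI)
    fix r c assume "r < ?N" "c < (6::nat)"
    show "?A r c < v" unfolding Arr_def using v0 by (intro F_lt) auto
  qed
  have p2: "\<forall>i x. i + 2 \<le> 6 \<longrightarrow> (\<forall>j<2. x j < v) \<longrightarrow> (\<exists>r<?N. \<forall>j<2. ?A r (i + j) = x j)"
  proof (intro allI impI)
    fix i x assume a: "i + 2 \<le> (6::nat)" "\<forall>j<2::nat. x j < v"
    obtain r where r: "r < ?N" "Arr v r i = x 0" "Arr v r (Suc i) = x 1"
      using cover[of i "x 0" v "x 1" 0 ?m] a assms by auto
    have "\<forall>j<2. ?A r (i + j) = x j"
    proof (intro allI impI)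
      fix j :: nat assume "j < 2"
      hence "j = 0 \<or> j = 1" by auto
      thus "?A r (i + j) = x j" using r by auto
    qed
    thus "\<exists>r<?N. \<forall>j<2. ?A r (i + j) = x j" using r(1) by blast
  qed
  have p3: "rho ?N ?A T \<subseteq> rho_set ?N ?A TT \<longleftrightarrow> T \<in> TT"
    if TT: "TT \<subseteq> cons_interactions 2 6 v" "finite TT" "card TT = d" and T: "T \<in> cons_interactions 2 6 v"
    for TT T
  proof
    assume sub: "rho ?N ?A T \<subseteq> rho_set ?N ?A TT"
    show "T \<in> TT"
    proof (rule ccontr)
      assume nT: "T \<notin> TT"
      have "rho ?N ?A T = (\<Union>T'\<in>TT. rho ?N ?A T \<inter> rho ?N ?A T')"
        using sub by (auto simp: rho_set_def)
      hence "card (rho ?N ?A T) \<le> (\<Sum>T'\<in>TT. card (rho ?N ?A T \<inter> rho ?N ?A T'))"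
        using TT(2) by (metis card_UN_le)
      also have "\<dots> \<le> (\<Sum>T'\<in>TT. 1)"
        using inter_le1[OF assms(1) assms(4) T] TT(1) nT by (intro sum_mono) blast
      also have "\<dots> = d" using TT by simp
      finally have "card (rho ?N ?A T) \<le> d" .
      moreover have "?m \<le> card (rho ?N ?A T)" using card_rho[OF T assms(4)] .
      ultimately show False by simp
    qed
  next
    assume "T \<in> TT"
    thus "rho ?N ?A T \<subseteq> rho_set ?N ?A TT" by (auto simp: rho_set_def)
  qed
  have "is_optimum_CDA d 2 ?N 6 v ?A"
    unfolding is_optimum_CDA_def is_CDA_def using p1 p2 p3 by blast
  thus ?thesis by blast
qed

end
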